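(* In the single-hop model described in the context, for every integer $k\ge 1$, $$P(SIR_1<\beta,\dots,SIR_k<\beta)\ \ge\ q^k,\qquad\text{where } q:=P(SIR_1<\beta).$$
   Context: Single-hop model. Fix $\alpha>2$, $\beta>0$, $d>0$, $p\in(0,1]$, $\lambda>0$. Let $\Phi$ be a homogeneous Poisson point process on $\mathbb{R}^2$ of intensity $\lambda$ (the same realization in every time slot). For each time slot $t\in\{1,2,\dots\}$ and each $x\in\Phi$ let $\mathbf 1_{x,t}\sim\mathrm{Bernoulli}(p)$, $G_{x,t}\sim\mathrm{Exp}(1)$, $H_t\sim\mathrm{Exp}(1)$, all mutually independent and independent of $\Phi$. Define $SIR_t:=\dfrac{d^{-\alpha}H_t}{\sum_{x\in\Phi}\mathbf 1_{x,t}|x|^{-\alpha}G_{x,t}}$. *)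

theory Defs
  imports "HOL-Probability.Probability"
begin

text \<open>The points of the Poisson point process Phi are enumerated by a random sequence
  X :: nat => omega => real^2 (the labelling plays no role: marks are attached to labels and
  are independent of the labelling).\<close>

definition pp_count :: "(nat \<Rightarrow> 'a \<Rightarrow> real^2) \<Rightarrow> (real^2) set \<Rightarrow> 'a \<Rightarrow> nat" where
  "pp_count X B \<omega> = card {n. X n \<omega> \<in> B}"

definition poisson_pp :: "'a measure \<Rightarrow> real \<Rightarrow> (nat \<Rightarrow> 'a \<Rightarrow> real^2) \<Rightarrow> bool" where
  "poisson_pp M lam X \<longleftrightarrow>
     (\<forall>n. X n \<in> borel_measurable M) \<and>
     (\<forall>B. B \<in> sets borel \<and> bounded B \<longrightarrow>
        (\<forall>k::nat. measure M {\<omega> \<in> space M. finite {n. X n \<omega> \<in> B} \<and> pp_count X B \<omega> = k}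
            = (lam * measure lborel B) ^ k / fact k * exp (- (lam * measure lborel B)))) \<and>
     (\<forall>(Bs :: nat \<Rightarrow> (real^2) set) m.
        (\<forall>i<m. Bs i \<in> sets borel \<and> bounded (Bs i)) \<and> disjoint_family_on Bs {..<m} \<longrightarrow>
        prob_space.indep_vars M (\<lambda>_. count_space UNIV) (\<lambda>i \<omega>. pp_count X (Bs i) \<omega>) {..<m})"

text \<open>All marks collected in one real-valued family: Bernoulli indicators Ind n t (for point n,
  slot t), fadings G n t, and the direct-link fading H t.\<close>

definition marks :: "(nat \<Rightarrow> nat \<Rightarrow> 'a \<Rightarrow> real) \<Rightarrow> (nat \<Rightarrow> nat \<Rightarrow> 'a \<Rightarrow> real) \<Rightarrow> (nat \<Rightarrow> 'a \<Rightarrow> real)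
    \<Rightarrow> ((nat \<times> nat) + ((nat \<times> nat) + nat)) \<Rightarrow> 'a \<Rightarrow> real" where
  "marks Ind G H i \<omega> = (case i of Inl (n, t) \<Rightarrow> Ind n t \<omega>
                                 | Inr (Inl (n, t)) \<Rightarrow> G n t \<omega>
                                 | Inr (Inr t) \<Rightarrow> H t \<omega>)"

text \<open>Interference in slot t (as an extended nonnegative real, possibly infinite) and the SIR
  in ennreal (so S/0 = infinity for S > 0 and S/infinity = 0).\<close>

definition interference :: "real \<Rightarrow> (nat \<Rightarrow> 'a \<Rightarrow> real^2) \<Rightarrow> (nat \<Rightarrow> nat \<Rightarrow> 'a \<Rightarrow> real)
    \<Rightarrow> (nat \<Rightarrow> nat \<Rightarrow> 'a \<Rightarrow> real) \<Rightarrow> nat \<Rightarrow> 'a \<Rightarrow> ennreal" where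
  "interference \<alpha> X Ind G t \<omega> = (\<Sum>n. ennreal (Ind n t \<omega> * norm (X n \<omega>) powr (- \<alpha>) * G n t \<omega>))"

definition SIR :: "real \<Rightarrow> real \<Rightarrow> (nat \<Rightarrow> 'a \<Rightarrow> real^2) \<Rightarrow> (nat \<Rightarrow> nat \<Rightarrow> 'a \<Rightarrow> real)
    \<Rightarrow> (nat \<Rightarrow> nat \<Rightarrow> 'a \<Rightarrow> real) \<Rightarrow> (nat \<Rightarrow> 'a \<Rightarrow> real) \<Rightarrow> nat \<Rightarrow> 'a \<Rightarrow> ennreal" where
  "SIR \<alpha> d X Ind G H t \<omega> = ennreal (d powr (- \<alpha>) * H t \<omega>) / interference \<alpha> X Ind G t \<omega>"

end

theory Submission
  imports Defs
begin

lemma tangent_pow: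
  fixes x c :: real assumes "0 \<le> x" "0 \<le> c"
  shows "c ^ k + real k * c ^ (k - 1) * (x - c) \<le> x ^ k"
proof (cases "c = 0")
  case True
  then show ?thesis using assms by (cases k) (auto simp: power_0_left)
next
  case False
  hence c: "c > 0" using assms by auto
  have "1 + real k * (x / c - 1) \<le> (1 + (x / c - 1)) ^ k"
    by (rule Bernoulli_inequality) (use assms c in auto)
  hence "c ^ k * (1 + real k * (x / c - 1)) \<le> c ^ k * (x / c) ^ k"
    using c by (intro mult_left_mono) auto
  also have "c ^ k * (x / c) ^ k = x ^ k" using c by (simp add: power_divide)
  also have "c ^ k * (1 + real k * (x / c - 1)) = c ^ k + real k * c ^ (k - 1) * (x - c)"
  proof (cases k)
    case (Suc m)
    then show ?thesis using c by (simp add: field_simps)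
  qed simp
  finally show ?thesis .
qed

lemma jensen_pow:
  fixes g :: "'a \<Rightarrow> real"
  assumes N: "prob_space N" and g: "g \<in> borel_measurable N"
    and b: "\<And>x. x \<in> space N \<Longrightarrow> 0 \<le> g x \<and> g x \<le> 1"
  shows "(integral\<^sup>L N g) ^ k \<le> integral\<^sup>L N (\<lambda>x. g x ^ k)"
proof -
  interpret prob_space N by fact
  have ig: "integrable N g"
    by (rule integrable_const_bound[where B=1], rule AE_I2) (use b g in auto)
  have igk: "integrable N (\<lambda>x. g x ^ k)"
    by (rule integrable_const_bound[where B=1], rule AE_I2) (use b g in \<open>auto intro: power_le_one\<close>)
  define c where "c = integral\<^sup>L N g"
  have c0: "0 \<le> c" unfolding c_def by (rule integral_nonneg_AE) (use b in auto)
  have "integral\<^sup>L N (\<lambda>x. c ^ k + real k * c ^ (k - 1) * (g x - c)) \<le> integral\<^sup>L N (\<lambda>x. g x ^ k)"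
    by (rule integral_mono) (use ig igk c0 b tangent_pow in auto)
  moreover have "integral\<^sup>L N (\<lambda>x. c ^ k + real k * c ^ (k - 1) * (g x - c)) = c ^ k"
    using ig by (simp add: c_def prob_space)
  ultimately show ?thesis unfolding c_def by simp
qed
lemma (in prob_space) prod_formula:
  fixes Y :: "'a \<Rightarrow> 'y" and W :: "nat \<Rightarrow> 'a \<Rightarrow> 'w" and T :: "nat set"
  assumes T: "finite T" "T \<noteq> {}"
    and Y: "random_variable SY Y"
    and W: "\<And>t. t \<in> T \<Longrightarrow> random_variable SW (W t)"
    and indYV: "\<And>a b. a \<in> sets SY \<Longrightarrow> b \<in> sets (PiM T (\<lambda>_. SW)) \<Longrightarrow>
        prob (Y -` a \<inter> (\<lambda>\<omega>. \<lambda>t\<in>T. W t \<omega>) -` b \<inter> space M)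
        = prob (Y -` a \<inter> space M) * prob ((\<lambda>\<omega>. \<lambda>t\<in>T. W t \<omega>) -` b \<inter> space M)"
    and indW: "indep_vars (\<lambda>_. SW) W T"
    and dist: "\<And>t. t \<in> T \<Longrightarrow> distr M SW (W t) = \<nu>"
    and A: "A \<in> sets (SY \<Otimes>\<^sub>M SW)"
  shows "prob {\<omega> \<in> space M. \<forall>t\<in>T. (Y \<omega>, W t \<omega>) \<in> A}
     = (\<integral>y. (measure \<nu> (Pair y -` A)) ^ card T \<partial>distr M SY Y)"
proof -
  define V where "V = (\<lambda>\<omega>. \<lambda>t\<in>T. W t \<omega>)"
  define PT where "PT = PiM T (\<lambda>_. SW)"
  define \<mu> where "\<mu> = distr M SY Y"
  obtain t0 where t0: "t0 \<in> T" using T by auto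
  have nu: "prob_space \<nu>" using dist[OF t0] W[OF t0] by (metis prob_space_distr)
  interpret nu: prob_space \<nu> by fact
  have snu: "sets \<nu> = sets SW" using dist[OF t0] by auto
  interpret mu: prob_space \<mu> unfolding \<mu>_def using Y by (rule prob_space_distr)
  have smu: "sets \<mu> = sets SY" unfolding \<mu>_def by simp
  interpret P: product_prob_space "\<lambda>_. \<nu>" T by unfold_locales
  have Pprob: "prob_space (PiM T (\<lambda>_. \<nu>))" by (rule prob_space_PiM) (rule nu)
  interpret Pp: prob_space "PiM T (\<lambda>_. \<nu>)" by fact
  have Vm: "V \<in> measurable M PT" unfolding V_def PT_def
    using W by (intro measurable_restrict) auto
  have dV: "distr M PT V = PiM T (\<lambda>_. \<nu>)"
  proof -
    have "distr M PT V = PiM T (\<lambda>t. distr M SW (W t))"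
      using indep_vars_iff_distr_eq_PiM'[of T W "\<lambda>_. SW"] T W indW
      unfolding V_def PT_def by auto
    also have "\<dots> = PiM T (\<lambda>_. \<nu>)" by (rule PiM_cong) (auto simp: dist)
    finally show ?thesis .
  qed
  have YVm: "(\<lambda>\<omega>. (Y \<omega>, V \<omega>)) \<in> measurable M (SY \<Otimes>\<^sub>M PT)"
    using Y Vm by measurable
  have joint: "distr M (SY \<Otimes>\<^sub>M PT) (\<lambda>\<omega>. (Y \<omega>, V \<omega>)) = \<mu> \<Otimes>\<^sub>M PiM T (\<lambda>_. \<nu>)"
  proof (rule pair_measure_eqI[symmetric])
    show "sigma_finite_measure \<mu>" by unfold_locales
    show "sigma_finite_measure (PiM T (\<lambda>_. \<nu>))" by unfold_locales
    show "sets (\<mu> \<Otimes>\<^sub>M PiM T (\<lambda>_. \<nu>)) = sets (distr M (SY \<Otimes>\<^sub>M PT) (\<lambda>\<omega>. (Y \<omega>, V \<omega>)))"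
      unfolding PT_def by (simp add: smu, intro sets_pair_measure_cong sets_PiM_cong) (auto simp: snu)
    fix a b assume a: "a \<in> sets \<mu>" and b: "b \<in> sets (PiM T (\<lambda>_. \<nu>))"
    have a': "a \<in> sets SY" using a smu by simp
    have b': "b \<in> sets PT" using b unfolding PT_def by (simp cong: sets_PiM_cong add: snu)
    have "emeasure \<mu> a * emeasure (PiM T (\<lambda>_. \<nu>)) b = emeasure M (Y -` a \<inter> space M) * emeasure M (V -` b \<inter> space M)"
      unfolding \<mu>_def dV[symmetric] using a' b' Y Vm by (simp add: emeasure_distr)
    also have "\<dots> = ennreal (prob (Y -` a \<inter> space M) * prob (V -` b \<inter> space M))"
      by (simp add: emeasure_eq_measure ennreal_mult)
    also have "\<dots> = ennreal (prob (Y -` a \<inter> V -` b \<inter> space M))"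
      using indYV[OF a' b'[unfolded PT_def]] unfolding V_def by simp
    also have "\<dots> = emeasure (distr M (SY \<Otimes>\<^sub>M PT) (\<lambda>\<omega>. (Y \<omega>, V \<omega>))) (a \<times> b)"
      using a' b' YVm by (simp add: emeasure_distr emeasure_eq_measure vimage_def Int_def conj_commute conj_left_commute)
    finally show "emeasure \<mu> a * emeasure (PiM T (\<lambda>_. \<nu>)) b = emeasure (distr M (SY \<Otimes>\<^sub>M PT) (\<lambda>\<omega>. (Y \<omega>, V \<omega>))) (a \<times> b)" .
  qed
  define S where "S = {p \<in> space (SY \<Otimes>\<^sub>M PT). \<forall>t\<in>T. (fst p, snd p t) \<in> A}"
  have S: "S \<in> sets (SY \<Otimes>\<^sub>M PT)"
    unfolding S_def
  proof (rule sets.sets_Collect_finite_All[OF _ T(1)])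
    fix t assume t: "t \<in> T"
    have m: "(\<lambda>p. (fst p, snd p t)) \<in> measurable (SY \<Otimes>\<^sub>M PT) (SY \<Otimes>\<^sub>M SW)"
      unfolding PT_def using t by measurable
    have "{p \<in> space (SY \<Otimes>\<^sub>M PT). (fst p, snd p t) \<in> A} = (\<lambda>p. (fst p, snd p t)) -` A \<inter> space (SY \<Otimes>\<^sub>M PT)"
      by auto
    then show "{p \<in> space (SY \<Otimes>\<^sub>M PT). (fst p, snd p t) \<in> A} \<in> sets (SY \<Otimes>\<^sub>M PT)"
      using measurable_sets[OF m A] by simp
  qed
  have pre: "{\<omega> \<in> space M. \<forall>t\<in>T. (Y \<omega>, W t \<omega>) \<in> A} = (\<lambda>\<omega>. (Y \<omega>, V \<omega>)) -` S \<inter> space M"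
    using measurable_space[OF YVm] unfolding S_def V_def by auto
  have "prob {\<omega> \<in> space M. \<forall>t\<in>T. (Y \<omega>, W t \<omega>) \<in> A} = measure (\<mu> \<Otimes>\<^sub>M PiM T (\<lambda>_. \<nu>)) S"
    unfolding pre joint[symmetric] using measure_distr[OF YVm S] by simp
  also have "\<dots> = enn2real (emeasure (\<mu> \<Otimes>\<^sub>M PiM T (\<lambda>_. \<nu>)) S)" by (simp add: measure_def)
  also have "emeasure (\<mu> \<Otimes>\<^sub>M PiM T (\<lambda>_. \<nu>)) S = (\<integral>\<^sup>+y. emeasure (PiM T (\<lambda>_. \<nu>)) (Pair y -` S) \<partial>\<mu>)"
  proof (rule sigma_finite_measure.emeasure_pair_measure_alt)
    show "sigma_finite_measure (PiM T (\<lambda>_. \<nu>))" by unfold_locales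
  next
    have "sets (\<mu> \<Otimes>\<^sub>M PiM T (\<lambda>_. \<nu>)) = sets (SY \<Otimes>\<^sub>M PT)"
      unfolding PT_def by (intro sets_pair_measure_cong smu sets_PiM_cong) (auto simp: snu)
    then show "S \<in> sets (\<mu> \<Otimes>\<^sub>M PiM T (\<lambda>_. \<nu>))" using S by simp
  qed
  also have "\<dots> = (\<integral>\<^sup>+y. ennreal ((measure \<nu> (Pair y -` A)) ^ card T) \<partial>\<mu>)"
  proof (rule nn_integral_cong)
    fix y assume y: "y \<in> space \<mu>"
    have Ay: "Pair y -` A \<in> sets \<nu>" using A snu by (simp add: sets_Pair1)
    have Asp: "A \<subseteq> space SY \<times> space SW" using sets.sets_into_space[OF A] by (simp add: space_pair_measure)
    have "Pair y -` S = PiE T (\<lambda>_. Pair y -` A)"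
      using y Asp unfolding S_def PT_def by (auto simp: space_pair_measure space_PiM smu[symmetric] PiE_iff sets_eq_imp_space_eq[OF smu] extensional_def)
    then have "emeasure (PiM T (\<lambda>_. \<nu>)) (Pair y -` S) = (\<Prod>t\<in>T. emeasure \<nu> (Pair y -` A))"
      using P.emeasure_PiM[OF T(1), of "\<lambda>_. Pair y -` A"] Ay by simp
    also have "\<dots> = ennreal ((measure \<nu> (Pair y -` A)) ^ card T)"
      by (simp add: nu.emeasure_eq_measure prod_ennreal ennreal_power)
    finally show "emeasure (PiM T (\<lambda>_. \<nu>)) (Pair y -` S) = ennreal ((measure \<nu> (Pair y -` A)) ^ card T)" .
  qed
  also have "\<dots> = ennreal (\<integral>y. (measure \<nu> (Pair y -` A)) ^ card T \<partial>\<mu>)"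
  proof (rule nn_integral_eq_integral)
    have A': "A \<in> sets (\<mu> \<Otimes>\<^sub>M \<nu>)"
      using A by (simp add: sets_pair_measure_cong[OF smu snu])
    have "(\<lambda>y. emeasure \<nu> (Pair y -` A)) \<in> borel_measurable \<mu>"
      by (rule nu.measurable_emeasure_Pair[OF A'])
    then have "(\<lambda>y. measure \<nu> (Pair y -` A)) \<in> borel_measurable \<mu>"
      unfolding measure_def by measurable
    then show "integrable \<mu> (\<lambda>y. (measure \<nu> (Pair y -` A)) ^ card T)"
      by (intro mu.integrable_const_bound[where B=1] AE_I2) (auto intro: power_le_one)
  qed auto
  finally show ?thesis unfolding \<mu>_def by (simp add: integral_nonneg_AE)
qed
lemma (in prob_space) indep_sets_reindex:
  assumes ind: "indep_sets F I" and inj: "inj_on f J" and sub: "f ` J \<subseteq> I"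
  shows "indep_sets (\<lambda>j. F (f j)) J"
  unfolding indep_sets_def
proof (intro conjI ballI allI impI)
  fix j assume "j \<in> J" then show "F (f j) \<subseteq> events"
    using ind sub unfolding indep_sets_def by auto
next
  fix K A assume K: "K \<subseteq> J" "K \<noteq> {}" "finite K" and A: "A \<in> Pi K (\<lambda>j. F (f j))"
  define B where "B = (\<lambda>i. A (inv_into K f i))"
  have injK: "inj_on f K" using inj K(1) by (rule inj_on_subset)
  have BA: "\<And>k. k \<in> K \<Longrightarrow> B (f k) = A k" unfolding B_def using injK by simp
  have "B \<in> Pi (f ` K) F" using A BA by auto
  then have "prob (\<Inter>i\<in>f ` K. B i) = (\<Prod>i\<in>f ` K. prob (B i))"
    using ind K sub unfolding indep_sets_def by (metis finite_imageI image_is_empty image_mono order_trans)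
  moreover have "(\<Inter>i\<in>f ` K. B i) = (\<Inter>k\<in>K. A k)" using BA by (simp add: image_image)
  moreover have "(\<Prod>i\<in>f ` K. prob (B i)) = (\<Prod>k\<in>K. prob (A k))"
    using injK BA by (simp add: prod.reindex)
  ultimately show "prob (\<Inter>j\<in>K. A j) = (\<Prod>j\<in>K. prob (A j))" by simp
qed


lemma (in prob_space) bin_law:
  fixes f :: "'a \<Rightarrow> real"
  assumes fm: "f \<in> borel_measurable M" and f01: "\<And>\<omega>. \<omega> \<in> space M \<Longrightarrow> f \<omega> \<in> {0, 1}"
    and fp: "prob {\<omega> \<in> space M. f \<omega> = 1} = p"
  shows "prob (f -` B \<inter> space M) = (if 1 \<in> B then p else 0) + (if 0 \<in> B then 1 - p else 0)"
proof -
  define E where "E = {\<omega> \<in> space M. f \<omega> = 1}"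
  have E: "E \<in> events" unfolding E_def using fm by measurable
  have "f -` B \<inter> space M = (if 1 \<in> B then E else {}) \<union> (if 0 \<in> B then space M - E else {})"
    using f01 unfolding E_def by (auto split: if_splits) (metis insert_iff singletonD)+
  moreover have "prob (space M - E) = 1 - p" using prob_compl[OF E] fp unfolding E_def by simp
  moreover have "prob (E \<union> (space M - E)) = 1" using E by (simp add: Un_absorb1 Diff_partition sets.sets_into_space prob_space)
  ultimately show ?thesis using fp E unfolding E_def[symmetric]
    by (auto simp: Un_Diff_cancel)
qed

lemma marks_simps:
  "marks Ind G H (Inl (n, t)) = Ind n t"
  "marks Ind G H (Inr (Inl (n, t))) = G n t"
  "marks Ind G H (Inr (Inr t)) = H t"
  by (auto simp: marks_def fun_eq_iff)

definition slot :: "nat \<Rightarrow> nat + (nat + unit) \<Rightarrow> (nat \<times> nat) + ((nat \<times> nat) + nat)" where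
  "slot t j = (case j of Inl n \<Rightarrow> Inl (n, t) | Inr (Inl n) \<Rightarrow> Inr (Inl (n, t)) | Inr (Inr u) \<Rightarrow> Inr (Inr t))"

lemma slot_inj: "slot t j = slot s j' \<Longrightarrow> t = s \<and> j = j'"
  by (auto simp: slot_def split: sum.splits)

definition Fsir :: "real \<Rightarrow> real \<Rightarrow> (nat \<Rightarrow> real^2) \<times> (nat + (nat + unit) \<Rightarrow> real) \<Rightarrow> ennreal" where
  "Fsir \<alpha> d p = ennreal (d powr (-\<alpha>) * snd p (Inr (Inr ()))) /
     (\<Sum>n. ennreal (snd p (Inl n) * norm (fst p n) powr (- \<alpha>) * snd p (Inr (Inl n))))"

theorem mainTheorem3:
  fixes M :: "'a measure"
    and \<alpha> \<beta> d p lam :: real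
    and X :: "nat \<Rightarrow> 'a \<Rightarrow> real^2"
    and Ind G :: "nat \<Rightarrow> nat \<Rightarrow> 'a \<Rightarrow> real"
    and H :: "nat \<Rightarrow> 'a \<Rightarrow> real"
    and k :: nat
  assumes "prob_space M"
    and "\<alpha> > 2" and "\<beta> > 0" and "d > 0" and "0 < p" and "p \<le> 1" and "lam > 0"
    and "poisson_pp M lam X"
    and "\<And>n t. Ind n t \<in> borel_measurable M"
    and "\<And>n t \<omega>. \<omega> \<in> space M \<Longrightarrow> Ind n t \<omega> \<in> {0, 1}"
    and "\<And>n t. measure M {\<omega> \<in> space M. Ind n t \<omega> = 1} = p"
    and "\<And>n t. distributed M lborel (G n t) (exponential_density 1)"
    and "\<And>t. distributed M lborel (H t) (exponential_density 1)"
    and "prob_space.indep_vars M (\<lambda>_. borel) (marks Ind G H) UNIV"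
    and "(\<lambda>\<omega> n. X n \<omega>) \<in> measurable M (PiM UNIV (\<lambda>_. borel))"
    and "(\<lambda>\<omega> i. marks Ind G H i \<omega>) \<in> measurable M (PiM UNIV (\<lambda>_. borel))"
    and "prob_space.indep_set M
           {(\<lambda>\<omega> n. X n \<omega>) -` A \<inter> space M | A. A \<in> sets (PiM UNIV (\<lambda>_. borel))}
           {(\<lambda>\<omega> i. marks Ind G H i \<omega>) -` A \<inter> space M | A. A \<in> sets (PiM UNIV (\<lambda>_. borel))}"
    and "k \<ge> 1"
  shows "measure M {\<omega> \<in> space M. \<forall>t\<in>{1..k}. SIR \<alpha> d X Ind G H t \<omega> < ennreal \<beta>}
           \<ge> (measure M {\<omega> \<in> space M. SIR \<alpha> d X Ind G H 1 \<omega> < ennreal \<beta>}) ^ k"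
  proof -
  interpret prob_space M by fact
  define Y where "Y = (\<lambda>\<omega> n. X n \<omega>)"
  define Z where "Z = (\<lambda>\<omega> i. marks Ind G H i \<omega>)"
  define W where "W = (\<lambda>t \<omega>. \<lambda>j. Z \<omega> (slot t j))"
  define SY where "SY = (PiM UNIV (\<lambda>_::nat. (borel :: (real^2) measure)))"
  define SZ where "SZ = (PiM UNIV (\<lambda>_::(nat \<times> nat) + ((nat \<times> nat) + nat). (borel :: real measure)))"
  define SW where "SW = (PiM UNIV (\<lambda>_::nat + (nat + unit). (borel :: real measure)))"
  define A where "A = {p \<in> space (SY \<Otimes>\<^sub>M SW). Fsir \<alpha> d p < ennreal \<beta>}"
  have Ym: "Y \<in> measurable M SY" using assms(15) unfolding Y_def SY_def .
  have Zm: "Z \<in> measurable M SZ" using assms(16) unfolding Z_def SZ_def .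
  have hm: "\<And>t. (\<lambda>z. \<lambda>j. z (slot t j)) \<in> measurable SZ SW" unfolding SZ_def SW_def
    by (rule measurable_PiM_single') (auto intro: measurable_component_singleton)
  have Wm: "\<And>t. W t \<in> measurable M SW" unfolding W_def using measurable_comp[OF Zm hm] by (simp add: comp_def)
  have Fm: "Fsir \<alpha> d \<in> borel_measurable (SY \<Otimes>\<^sub>M SW)" unfolding Fsir_def SY_def SW_def by measurable
  have Aset: "A \<in> sets (SY \<Otimes>\<^sub>M SW)" unfolding A_def using Fm by measurable
  have sir: "\<And>t \<omega>. SIR \<alpha> d X Ind G H t \<omega> = Fsir \<alpha> d (Y \<omega>, W t \<omega>)"
    unfolding SIR_def interference_def Fsir_def Y_def W_def Z_def marks_def slot_def by simp
  have ev: "\<And>T. {\<omega> \<in> space M. \<forall>t\<in>T. SIR \<alpha> d X Ind G H t \<omega> < ennreal \<beta>} = {\<omega> \<in> space M. \<forall>t\<in>T. (Y \<omega>, W t \<omega>) \<in> A}"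
    using measurable_space[OF Ym] measurable_space[OF Wm] unfolding A_def by (auto simp: sir space_pair_measure)
  define \<nu> where "\<nu> = distr M SW (W 1)"
  have indmarks: "indep_sets (\<lambda>i. {marks Ind G H i -` B \<inter> space M | B. B \<in> sets borel}) UNIV"
    using assms(14) by (simp add: indep_vars_def2)
  have rvmarks: "\<And>i. random_variable borel (marks Ind G H i)"
    using assms(14) by (simp add: indep_vars_def2)
  have marg: "\<And>t j. distr M borel (marks Ind G H (slot t j)) = distr M borel (marks Ind G H (slot 1 j))"
  proof -
    fix t j
    show "distr M borel (marks Ind G H (slot t j)) = distr M borel (marks Ind G H (slot 1 j))"
    proof (cases j)
      case (Inl n)
      have law: "\<And>s B. B \<in> sets borel \<Longrightarrow> emeasure (distr M borel (Ind n s)) B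
          = ennreal ((if 1 \<in> B then p else 0) + (if 0 \<in> B then 1 - p else 0))"
        using bin_law[OF assms(9) assms(10) assms(11)] assms(9)
        by (simp add: emeasure_distr emeasure_eq_measure)
      have "distr M borel (Ind n t) = distr M borel (Ind n 1)"
        by (rule measure_eqI) (simp_all add: law)
      then show ?thesis using Inl by (simp add: slot_def marks_simps)
    next
      case (Inr j2)
      show ?thesis
      proof (cases j2)
        case (Inl n)
        have "\<And>s. distr M borel (G n s) = density lborel (\<lambda>x. ennreal (exponential_density 1 x))"
        proof -
          fix s
          have "distr M borel (G n s) = distr M lborel (G n s)" by (rule distr_cong) auto
          then show "distr M borel (G n s) = density lborel (\<lambda>x. ennreal (exponential_density 1 x))"
            using assms(12)[of n s] by (simp add: distributed_def)
        qed
        then show ?thesis using Inr Inl by (simp add: slot_def marks_simps)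
      next
        case (Inr u)
        have "\<And>s. distr M borel (H s) = density lborel (\<lambda>x. ennreal (exponential_density 1 x))"
        proof -
          fix s
          have "distr M borel (H s) = distr M lborel (H s)" by (rule distr_cong) auto
          then show "distr M borel (H s) = density lborel (\<lambda>x. ennreal (exponential_density 1 x))"
            using assms(13)[of s] by (simp add: distributed_def)
        qed
        then show ?thesis using \<open>j = Inr j2\<close> Inr by (simp add: slot_def marks_simps)
      qed
    qed
  qed
  have law: "\<And>s. distr M SW (W s) = PiM UNIV (\<lambda>j. distr M borel (marks Ind G H (slot s j)))"
  proof -
    fix s
    have "indep_vars (\<lambda>_. borel) (\<lambda>j. marks Ind G H (slot s j)) UNIV"
      unfolding indep_vars_def2 using rvmarks indep_sets_reindex[OF indmarks, of "slot s" UNIV] slot_inj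
      by (auto simp: inj_on_def)
    then have "distr M (PiM UNIV (\<lambda>_. borel)) (\<lambda>x. \<lambda>i\<in>UNIV. marks Ind G H (slot s i) x)
       = PiM UNIV (\<lambda>j. distr M borel (marks Ind G H (slot s j)))"
      using indep_vars_iff_distr_eq_PiM[where I=UNIV and M'="\<lambda>_. borel" and X="\<lambda>j. marks Ind G H (slot s j)"] rvmarks by simp
    then show "distr M SW (W s) = PiM UNIV (\<lambda>j. distr M borel (marks Ind G H (slot s j)))"
      unfolding W_def Z_def SW_def by (simp only: restrict_UNIV)
  qed
  have dist_eq: "\<And>t. distr M SW (W t) = \<nu>"
    unfolding \<nu>_def law by (intro PiM_cong refl marg)
  have indW: "\<And>T. indep_vars (\<lambda>_. SW) W T"
  proof -
    fix T :: "nat set"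
    define Gt where "Gt = (\<lambda>t. \<Union>i\<in>range (slot t). {marks Ind G H i -` B \<inter> space M | B. B \<in> sets borel})"
    have Es: "indep_sets (\<lambda>t. sigma_sets (space M) (Gt t)) T"
      unfolding Gt_def
    proof (rule indep_sets_collect_sigma)
      show "indep_sets (\<lambda>i. {marks Ind G H i -` B \<inter> space M | B. B \<in> sets borel}) (\<Union>t\<in>T. range (slot t))"
        by (rule indep_sets_mono_index[OF _ indmarks]) auto
      show "disjoint_family_on (\<lambda>t. range (slot t)) T"
        unfolding disjoint_family_on_def using slot_inj by blast
      fix i t
      show "Int_stable {marks Ind G H i -` B \<inter> space M | B. B \<in> sets borel}"
        apply (auto simp: Int_stable_def)
        apply (rule_tac x="B \<inter> Ba" in exI)
        apply auto
        done
    qed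
    show "indep_vars (\<lambda>_. SW) W T"
      unfolding indep_vars_def
    proof (intro conjI ballI)
      show "\<And>t. random_variable SW (W t)" by (rule Wm)
      show "indep_sets (\<lambda>t. sigma_sets (space M) {W t -` B \<inter> space M |B. B \<in> sets SW}) T"
      proof (rule indep_sets_mono_sets[OF Es])
        fix t assume "t \<in> T"
        have Gsub: "Gt t \<subseteq> Pow (space M)" unfolding Gt_def by auto
        define N where "N = sigma (space M) (Gt t)"
        have spN: "space N = space M" unfolding N_def using Gsub by (simp add: space_measure_of)
        have sN: "sets N = sigma_sets (space M) (Gt t)" unfolding N_def using Gsub by (simp add: sets_measure_of)
        have "W t \<in> measurable N SW"
          unfolding W_def Z_def SW_def
        proof (rule measurable_PiM_single')
          fix j :: "nat + (nat + unit)"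
          show "(\<lambda>\<omega>. marks Ind G H (slot t j) \<omega>) \<in> measurable N borel"
          proof (rule measurableI)
            fix B :: "real set" assume "B \<in> sets borel"
            then have "marks Ind G H (slot t j) -` B \<inter> space M \<in> Gt t" unfolding Gt_def by blast
            then show "(\<lambda>\<omega>. marks Ind G H (slot t j) \<omega>) -` B \<inter> space N \<in> sets N"
              unfolding spN sN by (rule sigma_sets.Basic)
          qed simp
        qed simp
        then have "{W t -` B \<inter> space M |B. B \<in> sets SW} \<subseteq> sigma_sets (space M) (Gt t)"
          using measurable_sets[of "W t" N SW] spN sN by auto
        then show "sigma_sets (space M) {W t -` B \<inter> space M |B. B \<in> sets SW} \<subseteq> sigma_sets (space M) (Gt t)"
          by (rule sigma_sets_mono)
      qed
    qed
  qed
  have indXZ: "\<And>a b. a \<in> {Y -` C \<inter> space M | C. C \<in> sets SY} \<Longrightarrow> b \<in> {Z -` C \<inter> space M | C. C \<in> sets SZ}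
      \<Longrightarrow> prob (a \<inter> b) = prob a * prob b"
    using assms(17) unfolding indep_sets2_eq Y_def Z_def SY_def SZ_def by blast
  have indYV: "\<And>T a b. a \<in> sets SY \<Longrightarrow> b \<in> sets (PiM T (\<lambda>_. SW)) \<Longrightarrow>
        prob (Y -` a \<inter> (\<lambda>\<omega>. \<lambda>t\<in>T. W t \<omega>) -` b \<inter> space M)
        = prob (Y -` a \<inter> space M) * prob ((\<lambda>\<omega>. \<lambda>t\<in>T. W t \<omega>) -` b \<inter> space M)"
  proof -
    fix T :: "nat set" and a b
    assume a: "a \<in> sets SY" and b: "b \<in> sets (PiM T (\<lambda>_. SW))"
    define h where "h = (\<lambda>z::(nat \<times> nat) + ((nat \<times> nat) + nat) \<Rightarrow> real. \<lambda>t\<in>T. \<lambda>j. z (slot t j))"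
    have hmT: "h \<in> measurable SZ (PiM T (\<lambda>_. SW))" unfolding h_def
      by (rule measurable_restrict) (rule hm)
    define b' where "b' = h -` b \<inter> space SZ"
    have b': "b' \<in> sets SZ" unfolding b'_def using measurable_sets[OF hmT b] .
    have eqb: "Z -` b' \<inter> space M = (\<lambda>\<omega>. \<lambda>t\<in>T. W t \<omega>) -` b \<inter> space M"
      using measurable_space[OF Zm] unfolding b'_def h_def W_def by auto
    have "prob ((Y -` a \<inter> space M) \<inter> (Z -` b' \<inter> space M)) = prob (Y -` a \<inter> space M) * prob (Z -` b' \<inter> space M)"
      using a b' by (intro indXZ) auto
    then show "prob (Y -` a \<inter> (\<lambda>\<omega>. \<lambda>t\<in>T. W t \<omega>) -` b \<inter> space M)
        = prob (Y -` a \<inter> space M) * prob ((\<lambda>\<omega>. \<lambda>t\<in>T. W t \<omega>) -` b \<inter> space M)"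
    proof -
      have "Y -` a \<inter> (\<lambda>\<omega>. \<lambda>t\<in>T. W t \<omega>) -` b \<inter> space M = (Y -` a \<inter> space M) \<inter> (Z -` b' \<inter> space M)"
        using eqb by blast
      then show ?thesis using \<open>prob ((Y -` a \<inter> space M) \<inter> (Z -` b' \<inter> space M)) = _\<close> eqb by simp
    qed
  qed
  have PB: "\<And>T. finite T \<Longrightarrow> T \<noteq> {} \<Longrightarrow> prob {\<omega> \<in> space M. \<forall>t\<in>T. (Y \<omega>, W t \<omega>) \<in> A}
     = (\<integral>y. (measure \<nu> (Pair y -` A)) ^ card T \<partial>distr M SY Y)"
    by (rule prod_formula[OF _ _ Ym Wm indYV indW dist_eq Aset]) auto
  have nu: "prob_space \<nu>" unfolding \<nu>_def using Wm by (rule prob_space_distr)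
  have snu: "sets \<nu> = sets SW" unfolding \<nu>_def by simp
  have gm: "(\<lambda>y. measure \<nu> (Pair y -` A)) \<in> borel_measurable (distr M SY Y)"
  proof -
    have A': "A \<in> sets (distr M SY Y \<Otimes>\<^sub>M \<nu>)"
      using Aset sets_pair_measure_cong[OF refl snu, of SY] by simp
    have "(\<lambda>y. emeasure \<nu> (Pair y -` A)) \<in> borel_measurable (distr M SY Y)"
      by (rule sigma_finite_measure.measurable_emeasure_Pair[OF prob_space_imp_sigma_finite[OF nu] A'])
    then show ?thesis unfolding measure_def by measurable
  qed
  have "prob {\<omega> \<in> space M. SIR \<alpha> d X Ind G H 1 \<omega> < ennreal \<beta>}
      = prob {\<omega> \<in> space M. \<forall>t\<in>{1}. SIR \<alpha> d X Ind G H t \<omega> < ennreal \<beta>}" by simp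
  also have "\<dots> = (\<integral>y. measure \<nu> (Pair y -` A) \<partial>distr M SY Y)"
    unfolding ev using PB[of "{1}"] by simp
  finally have q: "prob {\<omega> \<in> space M. SIR \<alpha> d X Ind G H 1 \<omega> < ennreal \<beta>} = (\<integral>y. measure \<nu> (Pair y -` A) \<partial>distr M SY Y)" .
  have Pk: "prob {\<omega> \<in> space M. \<forall>t\<in>{1..k}. SIR \<alpha> d X Ind G H t \<omega> < ennreal \<beta>}
       = (\<integral>y. (measure \<nu> (Pair y -` A)) ^ k \<partial>distr M SY Y)"
    unfolding ev using PB[of "{1..k}"] assms(18) by simp
  show ?thesis unfolding q Pk
    by (rule jensen_pow[OF prob_space_distr[OF Ym] gm]) (auto intro: prob_space.prob_le_1[OF nu])
qed

end
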